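(* For integers $n\ge2$ and $r\ge2$, the windmill graph $W(n,r)$ admits a weak IASI and its sparing number is $\varphi(W(n,r))=\frac{r}{2}(n-1)(n-2)$.
   Context: The windmill graph $W(n,r)$ ($n\ge2$, $r\ge2$) is obtained by taking $r$ copies of the complete graph $K_n$ and identifying one vertex from each copy into a single shared vertex. Let $\mathbb{N}_0$ be the set of non-negative integers; for $A,B\subseteq\mathbb{N}_0$, $A+B=\{a+b:a\in A,b\in B\}$. An integer additive set-indexer (IASI) of a graph $G$ is an injective map $f:V(G)\to\mathcal{P}(\mathbb{N}_0)$ such that $f^+:E(G)\to\mathcal{P}(\mathbb{N}_0)$, $f^+(uv)=f(u)+f(v)$, is injective. A weak IASI is an IASI with $|f^+(uv)|=\max(|f(u)|,|f(v)|)$ for every edge $uv$. An edge $e$ is mono-indexed if $|f^+(e)|=1$. The sparing number $\varphi(G)$ is the minimum number of mono-indexed edges over all weak IASIs of $G$. *)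

theory Defs
  imports Complex_Main
begin

definition sumset :: "nat set \<Rightarrow> nat set \<Rightarrow> nat set" where
  "sumset A B = {a + b | a b. a \<in> A \<and> b \<in> B}"

text \<open>A simple graph is given by a vertex set V and a symmetric irreflexive adjacency
  relation adj (on V).\<close>

definition iasi :: "'v set \<Rightarrow> ('v \<Rightarrow> 'v \<Rightarrow> bool) \<Rightarrow> ('v \<Rightarrow> nat set) \<Rightarrow> bool" where
  "iasi V adj f \<longleftrightarrow>
     (\<forall>v\<in>V. finite (f v) \<and> f v \<noteq> {}) \<and>
     inj_on f V \<and>
     (\<forall>u v x y. adj u v \<longrightarrow> adj x y \<longrightarrow>
        sumset (f u) (f v) = sumset (f x) (f y) \<longrightarrow> {u, v} = {x, y})"

definition weak_iasi :: "'v set \<Rightarrow> ('v \<Rightarrow> 'v \<Rightarrow> bool) \<Rightarrow> ('v \<Rightarrow> nat set) \<Rightarrow> bool" where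
  "weak_iasi V adj f \<longleftrightarrow> iasi V adj f \<and>
     (\<forall>u v. adj u v \<longrightarrow> card (sumset (f u) (f v)) = max (card (f u)) (card (f v)))"

definition mono_edges :: "('v \<Rightarrow> 'v \<Rightarrow> bool) \<Rightarrow> ('v \<Rightarrow> nat set) \<Rightarrow> nat" where
  "mono_edges adj f = card {{u, v} | u v. adj u v \<and> card (sumset (f u) (f v)) = 1}"

definition sparing_number :: "'v set \<Rightarrow> ('v \<Rightarrow> 'v \<Rightarrow> bool) \<Rightarrow> nat" where
  "sparing_number V adj = Inf {mono_edges adj f | f. weak_iasi V adj f}"

text \<open>Windmill graph W(n,r): centre (0,0); vertex (i,j), 1 \<le> i \<le> r, 1 \<le> j \<le> n-1,
  is the j-th non-shared vertex of the i-th copy of K_n.\<close>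
definition windmill_V :: "nat \<Rightarrow> nat \<Rightarrow> (nat \<times> nat) set" where
  "windmill_V n r = insert (0, 0) ({1..r} \<times> {1..n - 1})"

definition windmill_adj :: "nat \<Rightarrow> nat \<Rightarrow> nat \<times> nat \<Rightarrow> nat \<times> nat \<Rightarrow> bool" where
  "windmill_adj n r u v \<longleftrightarrow> u \<in> windmill_V n r \<and> v \<in> windmill_V n r \<and> u \<noteq> v \<and>
     (fst u = fst v \<or> fst u = 0 \<or> fst v = 0)"

end

theory Submission
  imports Defs
begin

lemma sumset_img: "sumset A B = (\<lambda>(a,b). a + b) ` (A \<times> B)"
  unfolding sumset_def by auto

lemma sumset_finite: "finite A \<Longrightarrow> finite B \<Longrightarrow> finite (sumset A B)"
  unfolding sumset_img by simp

lemma sumset_comm: "sumset A B = sumset B A"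
  unfolding sumset_def by (metis add.commute)

lemma sumset_single[simp]: "sumset {a} {b} = {a + b}"
  unfolding sumset_def by auto

lemma sumset_01[simp]: "sumset {0,1} {x} = {x, x + 1}"
  unfolding sumset_def by auto

lemma sumset_10[simp]: "sumset {x} {0,1} = {x, x + 1}"
  unfolding sumset_def by auto

lemma sumset_grow:
  assumes "finite A" "finite B" "A \<noteq> {}" "card B \<ge> 2"
  shows "card (sumset A B) \<ge> card A + 1"
proof -
  have Bne: "B \<noteq> {}" using assms by auto
  define b0 where "b0 = Min B"
  define b1 where "b1 = Max B"
  have b0B: "b0 \<in> B" using assms Bne b0_def by simp
  have b1B: "b1 \<in> B" using assms Bne b1_def by simp
  have "b0 \<noteq> b1"
  proof
    assume "b0 = b1"
    hence "\<forall>x\<in>B. x = b0" using assms Bne b0_def b1_def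
      by (metis Max_ge Min_le antisym)
    hence "B \<subseteq> {b0}" by auto
    hence "card B \<le> card {b0}" by (intro card_mono) simp_all
    hence "card B \<le> 1" by simp
    thus False using assms by simp
  qed
  hence lt: "b0 < b1" using assms Bne b0_def b1_def b0B b1B by (metis Max_ge le_neq_implies_less)
  define a1 where "a1 = Max A"
  have a1A: "a1 \<in> A" using assms a1_def by simp
  have sub: "insert (a1 + b1) ((\<lambda>a. a + b0) ` A) \<subseteq> sumset A B"
    using a1A b1B b0B unfolding sumset_def by auto
  have notin: "a1 + b1 \<notin> (\<lambda>a. a + b0) ` A"
  proof
    assume "a1 + b1 \<in> (\<lambda>a. a + b0) ` A"
    then obtain a where "a \<in> A" "a1 + b1 = a + b0" by auto
    moreover have "a \<le> a1" using \<open>a \<in> A\<close> assms a1_def by simp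
    ultimately show False using lt by simp
  qed
  have "card (insert (a1 + b1) ((\<lambda>a. a + b0) ` A)) = card A + 1"
    using notin assms by (simp add: card_image)
  moreover have "card (insert (a1 + b1) ((\<lambda>a. a + b0) ` A)) \<le> card (sumset A B)"
    by (rule card_mono[OF sumset_finite[OF assms(1,2)] sub])
  ultimately show ?thesis by simp
qed

lemma pow2_aux:
  fixes a b c d :: nat
  shows "a < b \<Longrightarrow> c < d \<Longrightarrow> (2::nat)^a + 2^b = 2^c + 2^d \<Longrightarrow> a = c \<and> b = d"
proof (induction a arbitrary: b c d)
  case 0
  then obtain b' where b: "b = Suc b'" by (cases b) auto
  show ?case
  proof (cases c)
    case 0
    with "0.prems" show ?thesis by simp
  next
    case (Suc c')
    then obtain d' where "d = Suc d'" using "0.prems" by (cases d) auto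
    with Suc b "0.prems" have "Suc (2 * 2^b') = 2 * (2::nat)^c' + 2 * 2^d'" by simp
    then show ?thesis by presburger
  qed
next
  case (Suc a)
  then obtain b' where b: "b = Suc b'" by (cases b) auto
  show ?case
  proof (cases c)
    case 0
    then obtain d' where "d = Suc d'" using Suc.prems by (cases d) auto
    with 0 b Suc.prems have "2 * 2 ^ a + 2 * 2 ^ b' = Suc (2 * (2::nat) ^ d')" by simp
    then show ?thesis by presburger
  next
    case (Suc c')
    then obtain d' where d: "d = Suc d'" using Suc.prems by (cases d) auto
    have "(2::nat)^a + 2^b' = 2^c' + 2^d'" using Suc.prems b d Suc by simp
    moreover have "a < b'" "c' < d'" using Suc.prems b d Suc by auto
    ultimately have "a = c' \<and> b' = d'" using Suc.IH by blast
    thus ?thesis using Suc b d by simp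
  qed
qed

lemma pow2_pair:
  fixes a b c d :: nat
  assumes "a \<noteq> b" "c \<noteq> d" "(2::nat)^a + 2^b = 2^c + 2^d"
  shows "{a, b} = {c, d}"
proof -
  have "a < b \<or> b < a" "c < d \<or> d < c" using assms by auto
  thus ?thesis using assms pow2_aux[of a b c d] pow2_aux[of b a c d] pow2_aux[of a b d c] pow2_aux[of b a d c]
    by (auto simp: add.commute)
qed

definition E :: "'a set \<Rightarrow> 'a set set" where
  "E T = {A. A \<subseteq> T \<and> card A = 2}"

lemma card_E_union:
  assumes "finite I" "\<And>i. i \<in> I \<Longrightarrow> finite (T i) \<and> card (T i) = m"
    "\<And>i k. i \<in> I \<Longrightarrow> k \<in> I \<Longrightarrow> i \<noteq> k \<Longrightarrow> card (T i \<inter> T k) \<le> 1"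
  shows "card (\<Union>i\<in>I. E (T i)) = card I * (m choose 2)"
proof -
  have fin: "\<And>i. i \<in> I \<Longrightarrow> finite (E (T i))"
    using assms(2) unfolding E_def by (auto intro: finite_subset[of _ "Pow (T _)"])
  have disj: "\<forall>i\<in>I. \<forall>k\<in>I. i \<noteq> k \<longrightarrow> E (T i) \<inter> E (T k) = {}"
  proof (intro ballI impI)
    fix i k assume ik: "i \<in> I" "k \<in> I" "i \<noteq> k"
    show "E (T i) \<inter> E (T k) = {}"
    proof (rule ccontr)
      assume "E (T i) \<inter> E (T k) \<noteq> {}"
      then obtain A where "A \<subseteq> T i \<inter> T k" "card A = 2" unfolding E_def by auto
      hence "2 \<le> card (T i \<inter> T k)" using assms(2) ik
        by (metis card_mono finite_Int)
      thus False using assms(3)[OF ik] by simp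
    qed
  qed
  have "card (\<Union>i\<in>I. E (T i)) = (\<Sum>i\<in>I. card (E (T i)))"
    using card_UN_disjoint[OF assms(1) _ disj] fin by blast
  also have "\<dots> = (\<Sum>i\<in>I. m choose 2)"
    using assms(2) n_subsets unfolding E_def by (intro sum.cong) auto
  finally show ?thesis by simp
qed


definition blade :: "nat \<Rightarrow> nat \<Rightarrow> (nat \<times> nat) set" where
  "blade n i = insert (0,0) ({i} \<times> {1..n - 1})"

lemma finite_V: "finite (windmill_V n r)"
  unfolding windmill_V_def by simp

lemma blade_sub: "i \<in> {1..r} \<Longrightarrow> blade n i \<subseteq> windmill_V n r"
  unfolding blade_def windmill_V_def by auto

lemma blade_adj: "i \<in> {1..r} \<Longrightarrow> u \<in> blade n i \<Longrightarrow> v \<in> blade n i \<Longrightarrow> u \<noteq> v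
   \<Longrightarrow> windmill_adj n r u v"
  using blade_sub[of i r n] unfolding windmill_adj_def blade_def by auto

lemma blade_card: "i \<ge> 1 \<Longrightarrow> n \<ge> 1 \<Longrightarrow> card (blade n i) = n"
proof -
  assume "i \<ge> 1" "n \<ge> 1"
  hence "(0,0) \<notin> {i} \<times> {1..n - 1}" by auto
  hence "card (blade n i) = Suc (card ({i} \<times> {1..n - 1}))" unfolding blade_def by simp
  also have "\<dots> = n" using \<open>n \<ge> 1\<close> by (simp add: card_cartesian_product)
  finally show ?thesis .
qed

lemma blade_inter: "i \<noteq> k \<Longrightarrow> blade n i \<inter> blade n k = {(0,0)}"
  unfolding blade_def by auto

lemma adj_V: "windmill_adj n r u v \<Longrightarrow> u \<in> windmill_V n r \<and> v \<in> windmill_V n r \<and> u \<noteq> v"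
  unfolding windmill_adj_def by auto

lemma mono_finite: "finite {{u, v} | u v. windmill_adj n r u v \<and> P u v}"
proof (rule finite_subset[of _ "Pow (windmill_V n r)"])
  show "{{u, v} | u v. windmill_adj n r u v \<and> P u v} \<subseteq> Pow (windmill_V n r)"
    using adj_V by fastforce
qed (simp add: finite_V)

lemma lower:
  assumes w: "weak_iasi (windmill_V n r) (windmill_adj n r) f" and n: "n \<ge> 2"
  shows "r * ((n - 1) choose 2) \<le> mono_edges (windmill_adj n r) f"
proof -
  let ?V = "windmill_V n r" and ?adj = "windmill_adj n r"
  have fv: "\<And>v. v \<in> ?V \<Longrightarrow> finite (f v) \<and> f v \<noteq> {}" using w unfolding weak_iasi_def iasi_def by blast
  have wk: "\<And>u v. ?adj u v \<Longrightarrow> card (sumset (f u) (f v)) = max (card (f u)) (card (f v))"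
    using w unfolding weak_iasi_def by blast
  have indep: "\<And>u v. ?adj u v \<Longrightarrow> card (f u) = 1 \<or> card (f v) = 1"
  proof (rule ccontr)
    fix u v assume a: "?adj u v" "\<not> (card (f u) = 1 \<or> card (f v) = 1)"
    have fu: "finite (f u)" "f u \<noteq> {}" and fvv: "finite (f v)" "f v \<noteq> {}" using fv adj_V[OF a(1)] by auto
    have "card (f u) > 0" "card (f v) > 0" using fu fvv by auto
    hence "card (f u) \<ge> 2" "card (f v) \<ge> 2" using a(2) by auto
    hence "card (sumset (f u) (f v)) \<ge> card (f u) + 1" "card (sumset (f v) (f u)) \<ge> card (f v) + 1"
      using sumset_grow fu fvv by auto
    hence "card (sumset (f u) (f v)) > max (card (f u)) (card (f v))"
      using sumset_comm[of "f u" "f v"] by auto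
    thus False using wk[OF a(1)] by simp
  qed
  have ex: "\<forall>i\<in>{1..r}. \<exists>w\<in>blade n i. \<forall>v\<in>blade n i. v \<noteq> w \<longrightarrow> card (f v) = 1"
  proof
    fix i assume i: "i \<in> {1..r}"
    show "\<exists>w\<in>blade n i. \<forall>v\<in>blade n i. v \<noteq> w \<longrightarrow> card (f v) = 1"
    proof (cases "\<exists>w\<in>blade n i. card (f w) \<noteq> 1")
      case True
      then obtain w where "w \<in> blade n i" "card (f w) \<noteq> 1" by blast
      thus ?thesis using indep blade_adj[OF i] by metis
    next
      case False
      thus ?thesis unfolding blade_def by blast
    qed
  qed
  then obtain w where wp: "\<And>i. i\<in>{1..r} \<Longrightarrow> w i \<in> blade n i \<and> (\<forall>v\<in>blade n i. v \<noteq> w i \<longrightarrow> card (f v) = 1)"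
    by metis
  define T where "T i = blade n i - {w i}" for i
  let ?M = "{{u, v} | u v. ?adj u v \<and> card (sumset (f u) (f v)) = 1}"
  have cardT: "\<And>i. i \<in> {1..r} \<Longrightarrow> finite (T i) \<and> card (T i) = n - 1"
    using wp blade_card n unfolding T_def by (auto simp: blade_def)
  have interT: "\<And>i k. i \<in> {1..r} \<Longrightarrow> k \<in> {1..r} \<Longrightarrow> i \<noteq> k \<Longrightarrow> card (T i \<inter> T k) \<le> 1"
  proof -
    fix i k assume "i \<in> {1..r}" "k \<in> {1..r}" "i \<noteq> k"
    have "T i \<inter> T k \<subseteq> {(0,0)}" using blade_inter[OF \<open>i \<noteq> k\<close>, of n] unfolding T_def by auto
    hence "card (T i \<inter> T k) \<le> card {(0::nat,0::nat)}" by (intro card_mono) simp_all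
    thus "card (T i \<inter> T k) \<le> 1" by simp
  qed
  have sub: "(\<Union>i\<in>{1..r}. E (T i)) \<subseteq> ?M"
  proof
    fix A assume "A \<in> (\<Union>i\<in>{1..r}. E (T i))"
    then obtain i where i: "i \<in> {1..r}" and A: "A \<subseteq> T i" "card A = 2" unfolding E_def by auto
    then obtain u v where uv: "A = {u, v}" "u \<noteq> v" by (meson card_2_iff)
    have uT: "u \<in> T i" and vT: "v \<in> T i" using A uv by auto
    have adj: "?adj u v" using blade_adj[OF i] uT vT uv unfolding T_def by auto
    have "card (f u) = 1" "card (f v) = 1" using wp[OF i] uT vT unfolding T_def by auto
    then obtain a b where "f u = {a}" "f v = {b}" by (meson card_1_singletonE)
    hence "card (sumset (f u) (f v)) = 1" by simp
    thus "A \<in> ?M" using adj uv by blast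
  qed
  have "r * ((n - 1) choose 2) = card (\<Union>i\<in>{1..r}. E (T i))"
    using card_E_union[of "{1..r}" T "n - 1"] cardT interT by simp
  also have "\<dots> \<le> card ?M" by (rule card_mono[OF mono_finite sub])
  finally show ?thesis unfolding mono_edges_def .
qed


definition code :: "nat \<Rightarrow> nat \<times> nat \<Rightarrow> nat" where
  "code n v = fst v * n + snd v"

definition f0 :: "nat \<Rightarrow> nat \<times> nat \<Rightarrow> nat set" where
  "f0 n v = (if v = (0,0) then {0,1} else {2 ^ code n v})"

lemma nc_V: "v \<in> windmill_V n r \<Longrightarrow> v \<noteq> (0,0) \<Longrightarrow> fst v \<in> {1..r} \<and> snd v \<in> {1..n-1}"
  unfolding windmill_V_def by auto

lemma code_inj:
  assumes "u \<in> windmill_V n r" "v \<in> windmill_V n r" "u \<noteq> (0,0)" "v \<noteq> (0,0)" "code n u = code n v" "n \<ge> 2"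
  shows "u = v"
proof -
  have "snd u < n" "snd v < n" using nc_V[OF assms(1,3)] nc_V[OF assms(2,4)] assms(6) by auto
  hence "code n u mod n = snd u" "code n v mod n = snd v" "code n u div n = fst u" "code n v div n = fst v"
    unfolding code_def by auto
  thus ?thesis using assms(5) by (metis prod.collapse)
qed

lemma pow_inj:
  assumes "u \<in> windmill_V n r" "v \<in> windmill_V n r" "u \<noteq> (0,0)" "v \<noteq> (0,0)"
    "(2::nat) ^ code n u = 2 ^ code n v" "n \<ge> 2"
  shows "u = v"
  using code_inj[OF assms(1-4) _ assms(6)] assms(5) by simp

lemma f0_sums:
  assumes "windmill_adj n r u v"
  shows "(u = (0,0) \<and> v \<noteq> (0,0) \<and> sumset (f0 n u) (f0 n v) = {2 ^ code n v, 2 ^ code n v + 1}) \<or>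
         (v = (0,0) \<and> u \<noteq> (0,0) \<and> sumset (f0 n u) (f0 n v) = {2 ^ code n u, 2 ^ code n u + 1}) \<or>
         (u \<noteq> (0,0) \<and> v \<noteq> (0,0) \<and> sumset (f0 n u) (f0 n v) = {2 ^ code n u + 2 ^ code n v})"
proof -
  have "u \<noteq> v" using adj_V[OF assms] by simp
  show ?thesis
  proof (cases "u = (0,0)")
    case True
    hence "v \<noteq> (0,0)" using \<open>u \<noteq> v\<close> by simp
    thus ?thesis using True by (simp add: f0_def del: One_nat_def)
  next
    case False
    show ?thesis
    proof (cases "v = (0,0)")
      case True
      thus ?thesis using False by (simp add: f0_def del: One_nat_def)
    next
      case F: False
      thus ?thesis using False by (simp add: f0_def)
    qed
  qed
qed

lemma two_ne_one: "{p, p + 1} \<noteq> {q::nat}"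
  by (metis doubleton_eq_iff insert_absorb2 n_not_Suc_n Suc_eq_plus1 singleton_insert_inj_eq)

lemma two_eq: "{p, p + 1} = {q, q + (1::nat)} \<Longrightarrow> p = q"
  unfolding doubleton_eq_iff by arith

lemma f0_weak:
  assumes n: "n \<ge> 2"
  shows "weak_iasi (windmill_V n r) (windmill_adj n r) (f0 n)"
  unfolding weak_iasi_def iasi_def
proof (intro conjI allI impI ballI)
  fix v show "finite (f0 n v)" "f0 n v \<noteq> {}" unfolding f0_def by auto
next
  show "inj_on (f0 n) (windmill_V n r)"
  proof
    fix u v assume uv: "u \<in> windmill_V n r" "v \<in> windmill_V n r" "f0 n u = f0 n v"
    show "u = v"
    proof (cases "u = (0,0)"; cases "v = (0,0)")
      assume "u \<noteq> (0,0)" "v \<noteq> (0,0)"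
      thus ?thesis using uv pow_inj[OF uv(1,2) _ _ _ n] unfolding f0_def by auto
    qed (use uv in \<open>auto simp: f0_def\<close>)
  qed
next
  fix u v assume a: "windmill_adj n r u v"
  show "card (sumset (f0 n u) (f0 n v)) = max (card (f0 n u)) (card (f0 n v))"
    using f0_sums[OF a] unfolding f0_def by auto
next
  fix u v x y assume a: "windmill_adj n r u v" "windmill_adj n r x y"
    and eq: "sumset (f0 n u) (f0 n v) = sumset (f0 n x) (f0 n y)"
  note V = adj_V[OF a(1)] adj_V[OF a(2)]
  have pinj: "\<And>p q. p \<in> windmill_V n r \<Longrightarrow> q \<in> windmill_V n r \<Longrightarrow> p \<noteq> (0,0) \<Longrightarrow> q \<noteq> (0,0)
     \<Longrightarrow> (2::nat) ^ code n p = 2 ^ code n q \<Longrightarrow> p = q" using pow_inj n by blast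
  have pair: "\<And>p q s t. p \<in> windmill_V n r \<Longrightarrow> q \<in> windmill_V n r \<Longrightarrow> s \<in> windmill_V n r \<Longrightarrow> t \<in> windmill_V n r
     \<Longrightarrow> p \<noteq> (0,0) \<Longrightarrow> q \<noteq> (0,0) \<Longrightarrow> s \<noteq> (0,0) \<Longrightarrow> t \<noteq> (0,0) \<Longrightarrow> p \<noteq> q \<Longrightarrow> s \<noteq> t
     \<Longrightarrow> (2::nat) ^ code n p + 2 ^ code n q = 2 ^ code n s + 2 ^ code n t \<Longrightarrow> {p, q} = {s, t}"
  proof -
    fix p q s t assume h: "p \<in> windmill_V n r" "q \<in> windmill_V n r" "s \<in> windmill_V n r" "t \<in> windmill_V n r"
      "p \<noteq> (0,0)" "q \<noteq> (0,0)" "s \<noteq> (0,0)" "t \<noteq> (0,0)" "p \<noteq> q" "s \<noteq> t"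
      "(2::nat) ^ code n p + 2 ^ code n q = 2 ^ code n s + 2 ^ code n t"
    have "code n p \<noteq> code n q" "code n s \<noteq> code n t" using code_inj h n by metis+
    hence "{code n p, code n q} = {code n s, code n t}" using pow2_pair h(11) by blast
    hence "(code n p = code n s \<and> code n q = code n t) \<or> (code n p = code n t \<and> code n q = code n s)"
      by (metis doubleton_eq_iff)
    thus "{p, q} = {s, t}"
    proof
      assume "code n p = code n s \<and> code n q = code n t"
      thus ?thesis using code_inj[OF h(1,3,5,7) _ n] code_inj[OF h(2,4,6,8) _ n] by simp
    next
      assume "code n p = code n t \<and> code n q = code n s"
      thus ?thesis using code_inj[OF h(1,4,5,8) _ n] code_inj[OF h(2,3,6,7) _ n] by auto
    qed
  qed
  have cc: "\<And>p q. p \<in> windmill_V n r \<Longrightarrow> q \<in> windmill_V n r \<Longrightarrow> p \<noteq> (0,0) \<Longrightarrow> q \<noteq> (0,0)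
     \<Longrightarrow> {(2::nat) ^ code n p, 2 ^ code n p + 1} = {2 ^ code n q, 2 ^ code n q + 1} \<Longrightarrow> p = q"
    using pinj two_eq by blast
  define g where "g p = (2::nat) ^ code n p" for p
  have s1: "(u = (0,0) \<and> v \<noteq> (0,0) \<and> sumset (f0 n x) (f0 n y) = {g v, g v + 1}) \<or>
         (v = (0,0) \<and> u \<noteq> (0,0) \<and> sumset (f0 n x) (f0 n y) = {g u, g u + 1}) \<or>
         (u \<noteq> (0,0) \<and> v \<noteq> (0,0) \<and> sumset (f0 n x) (f0 n y) = {g u + g v})"
    using f0_sums[OF a(1)] eq unfolding g_def by metis
  have s2: "(x = (0,0) \<and> y \<noteq> (0,0) \<and> sumset (f0 n x) (f0 n y) = {g y, g y + 1}) \<or>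
         (y = (0,0) \<and> x \<noteq> (0,0) \<and> sumset (f0 n x) (f0 n y) = {g x, g x + 1}) \<or>
         (x \<noteq> (0,0) \<and> y \<noteq> (0,0) \<and> sumset (f0 n x) (f0 n y) = {g x + g y})"
    using f0_sums[OF a(2)] unfolding g_def by metis
  have cc': "\<And>p q. p \<in> windmill_V n r \<Longrightarrow> q \<in> windmill_V n r \<Longrightarrow> p \<noteq> (0,0) \<Longrightarrow> q \<noteq> (0,0)
     \<Longrightarrow> {g p, g p + 1} = {g q, g q + 1} \<Longrightarrow> p = q" using cc unfolding g_def by blast
  have ne: "\<And>p q. {g p, g p + 1} \<noteq> {q}" by (rule two_ne_one)
  have pair': "\<And>p q s t. p \<in> windmill_V n r \<Longrightarrow> q \<in> windmill_V n r \<Longrightarrow> s \<in> windmill_V n r \<Longrightarrow> t \<in> windmill_V n r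
     \<Longrightarrow> p \<noteq> (0,0) \<Longrightarrow> q \<noteq> (0,0) \<Longrightarrow> s \<noteq> (0,0) \<Longrightarrow> t \<noteq> (0,0) \<Longrightarrow> p \<noteq> q \<Longrightarrow> s \<noteq> t
     \<Longrightarrow> g p + g q = g s + g t \<Longrightarrow> {p, q} = {s, t}" using pair unfolding g_def by blast
  from s1 show "{u, v} = {x, y}"
  proof (elim disjE conjE)
    assume h: "u = (0,0)" "v \<noteq> (0,0)" "sumset (f0 n x) (f0 n y) = {g v, g v + 1}"
    from s2 show ?thesis
    proof (elim disjE conjE)
      assume h2: "x = (0,0)" "y \<noteq> (0,0)" "sumset (f0 n x) (f0 n y) = {g y, g y + 1}"
      have "v = y" using cc'[of v y] h h2 V by metis
      thus ?thesis using h h2 by simp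
    next
      assume h2: "y = (0,0)" "x \<noteq> (0,0)" "sumset (f0 n x) (f0 n y) = {g x, g x + 1}"
      have "v = x" using cc'[of v x] h h2 V by metis
      thus ?thesis using h h2 by (simp add: insert_commute)
    next
      assume h2: "x \<noteq> (0,0)" "y \<noteq> (0,0)" "sumset (f0 n x) (f0 n y) = {g x + g y}"
      thus ?thesis using h ne by metis
    qed
  next
    assume h: "v = (0,0)" "u \<noteq> (0,0)" "sumset (f0 n x) (f0 n y) = {g u, g u + 1}"
    from s2 show ?thesis
    proof (elim disjE conjE)
      assume h2: "x = (0,0)" "y \<noteq> (0,0)" "sumset (f0 n x) (f0 n y) = {g y, g y + 1}"
      have "u = y" using cc'[of u y] h h2 V by metis
      thus ?thesis using h h2 by (simp add: insert_commute)
    next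
      assume h2: "y = (0,0)" "x \<noteq> (0,0)" "sumset (f0 n x) (f0 n y) = {g x, g x + 1}"
      have "u = x" using cc'[of u x] h h2 V by metis
      thus ?thesis using h h2 by simp
    next
      assume h2: "x \<noteq> (0,0)" "y \<noteq> (0,0)" "sumset (f0 n x) (f0 n y) = {g x + g y}"
      thus ?thesis using h ne by metis
    qed
  next
    assume h: "u \<noteq> (0,0)" "v \<noteq> (0,0)" "sumset (f0 n x) (f0 n y) = {g u + g v}"
    from s2 show ?thesis
    proof (elim disjE conjE)
      assume h2: "x = (0,0)" "y \<noteq> (0,0)" "sumset (f0 n x) (f0 n y) = {g y, g y + 1}"
      thus ?thesis using h ne by metis
    next
      assume h2: "y = (0,0)" "x \<noteq> (0,0)" "sumset (f0 n x) (f0 n y) = {g x, g x + 1}"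
      thus ?thesis using h ne by metis
    next
      assume h2: "x \<noteq> (0,0)" "y \<noteq> (0,0)" "sumset (f0 n x) (f0 n y) = {g x + g y}"
      have "g u + g v = g x + g y" using h(3) h2(3) by simp
      thus ?thesis using pair'[of u v x y] h h2 V by blast
    qed
  qed
qed


lemma f0_mono:
  assumes n: "n \<ge> 2"
  shows "mono_edges (windmill_adj n r) (f0 n) = r * ((n - 1) choose 2)"
proof -
  define T where "T i = {i} \<times> {1..n - 1}" for i :: nat
  let ?M = "{{u, v} | u v. windmill_adj n r u v \<and> card (sumset (f0 n u) (f0 n v)) = 1}"
  have eq: "?M = (\<Union>i\<in>{1..r}. E (T i))"
  proof
    show "?M \<subseteq> (\<Union>i\<in>{1..r}. E (T i))"
    proof
      fix A assume "A \<in> ?M"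
      then obtain u v where A: "A = {u, v}" and a: "windmill_adj n r u v"
        and c: "card (sumset (f0 n u) (f0 n v)) = 1" by blast
      have "u \<noteq> (0,0) \<and> v \<noteq> (0,0)" using f0_sums[OF a] c by auto
      hence nc: "fst u \<in> {1..r} \<and> snd u \<in> {1..n-1}" "fst v \<in> {1..r} \<and> snd v \<in> {1..n-1}"
        using nc_V adj_V[OF a] by blast+
      have "fst u = fst v" using a nc unfolding windmill_adj_def by auto
      hence "A \<subseteq> T (fst u)" "card A = 2" using A nc adj_V[OF a] unfolding T_def
        by (auto simp: mem_Times_iff)
      thus "A \<in> (\<Union>i\<in>{1..r}. E (T i))" using nc unfolding E_def by blast
    qed
  next
    show "(\<Union>i\<in>{1..r}. E (T i)) \<subseteq> ?M"
    proof
      fix A assume "A \<in> (\<Union>i\<in>{1..r}. E (T i))"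
      then obtain i where i: "i \<in> {1..r}" and A: "A \<subseteq> T i" "card A = 2" unfolding E_def by auto
      then obtain u v where uv: "A = {u, v}" "u \<noteq> v" by (meson card_2_iff)
      have uT: "u \<in> T i" and vT: "v \<in> T i" using A uv by auto
      have adj: "windmill_adj n r u v" using blade_adj[OF i, of u n v] uT vT uv
        unfolding T_def blade_def by auto
      have "u \<noteq> (0,0)" "v \<noteq> (0,0)" using uT vT i unfolding T_def by auto
      hence "card (sumset (f0 n u) (f0 n v)) = 1" unfolding f0_def by simp
      thus "A \<in> ?M" using adj uv by blast
    qed
  qed
  have "card (\<Union>i\<in>{1..r}. E (T i)) = r * ((n - 1) choose 2)"
  proof -
    have "card (\<Union>i\<in>{1..r}. E (T i)) = card {1..r} * ((n - 1) choose 2)"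
    proof (rule card_E_union)
      fix i assume "i \<in> {1..r}"
      show "finite (T i) \<and> card (T i) = n - 1" unfolding T_def by (simp add: card_cartesian_product)
    next
      fix i k :: nat assume "i \<noteq> k"
      hence "T i \<inter> T k = {}" unfolding T_def by auto
      thus "card (T i \<inter> T k) \<le> 1" by simp
    qed simp
    thus ?thesis by simp
  qed
  thus ?thesis unfolding mono_edges_def using eq by simp
qed

theorem theorem2p15:
  fixes n r :: nat
  assumes "n \<ge> 2" and "r \<ge> 2"
  shows "(\<exists>f. weak_iasi (windmill_V n r) (windmill_adj n r) f) \<and>
         real (sparing_number (windmill_V n r) (windmill_adj n r))
           = real r / 2 * real (n - 1) * real (n - 2)"
proof
  show "\<exists>f. weak_iasi (windmill_V n r) (windmill_adj n r) f" using f0_weak[OF assms(1)] by blast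
  have sp: "sparing_number (windmill_V n r) (windmill_adj n r) = r * ((n - 1) choose 2)"
    unfolding sparing_number_def
  proof (rule cInf_eq_minimum)
    show "r * ((n - 1) choose 2) \<in> {mono_edges (windmill_adj n r) f |f. weak_iasi (windmill_V n r) (windmill_adj n r) f}"
      using f0_weak[OF assms(1)] f0_mono[OF assms(1), of r] by (intro CollectI exI[of _ "f0 n"]) simp
  next
    fix x assume "x \<in> {mono_edges (windmill_adj n r) f |f. weak_iasi (windmill_V n r) (windmill_adj n r) f}"
    then obtain f where "x = mono_edges (windmill_adj n r) f" "weak_iasi (windmill_V n r) (windmill_adj n r) f"
      by blast
    thus "r * ((n - 1) choose 2) \<le> x" using lower[OF _ assms(1)] by simp
  qed
  obtain k where k: "n = k + 2" using assms(1) by (metis add.commute le_Suc_ex)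
  have ev: "even ((k + 1) * k)" by (cases "even k") auto
  have "2 * ((n - 1) choose 2) = (n - 1) * (n - 2)"
  proof -
    have "(n - 1) choose 2 = (k + 1) * k div 2" unfolding choose_two k by simp
    hence "2 * ((n - 1) choose 2) = (k + 1) * k" using ev by simp
    thus ?thesis using k by simp
  qed
  hence "real (2 * ((n - 1) choose 2)) = real ((n - 1) * (n - 2))" by simp
  hence "2 * real ((n - 1) choose 2) = real (n - 1) * real (n - 2)" by simp
  thus "real (sparing_number (windmill_V n r) (windmill_adj n r)) = real r / 2 * real (n - 1) * real (n - 2)"
    unfolding sp by (simp add: field_simps)
qed

end
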